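(* Let $k$ be a positive integer and $i$ an integer with $1\le i<\left\lfloor\frac{k+1}2\right\rfloor$. Then $\beta=\frac1{i^2}$ is a zero of the polynomial $P_k(1,\beta,0)$ of multiplicity at least $\left\lfloor\frac{k+1}2\right\rfloor-i$.
   Context: Define $\widetilde c_n\in\mathbb Q[\beta]$ by $\widetilde c_0=2$, $\widetilde c_1=1$, $(n+1)\widetilde c_{n+1}=\widetilde c_n+\frac\beta4(n-1)\widetilde c_{n-1}$ for $n\ge1$, and $\widetilde c_n=0$ for $n<0$. $P_k(1,\beta,0)$ is the $k\times k$ determinant with $(j,l)$ entry $\widetilde c_{k-2(j-1)+(l-1)}$, $1\le j,l\le k$. *)

theory Defs
  imports "HOL-Computational_Algebra.Polynomial" "Jordan_Normal_Form.Determinant"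
begin

fun ctilde_nat :: "nat \<Rightarrow> rat poly" where
  "ctilde_nat 0 = [:2:]"
| "ctilde_nat (Suc 0) = [:1:]"
| "ctilde_nat (Suc (Suc n)) =
     smult (1 / (of_nat n + 2)) (ctilde_nat (Suc n) + [:0, of_nat n / 4:] * ctilde_nat n)"

definition ctilde :: "int \<Rightarrow> rat poly" where
  "ctilde n = (if n < 0 then 0 else ctilde_nat (nat n))"

text \<open>P_k(1,beta,0): k x k determinant with (j,l) entry c~_(k-2(j-1)+(l-1)), 1-based;
  here with 0-based indices j,l < k the entry is c~_(k-2j+l).\<close>
definition Pk :: "nat \<Rightarrow> rat poly" where
  "Pk k = det (mat k k (\<lambda>(j, l). ctilde (int k - 2 * int j + int l)))"

end

theory Submission
  imports Defs "HOL-Computational_Algebra.Formal_Power_Series"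
begin

lemma binom_fps_nth:
  "fps_nth ((1 + fps_const (c::rat) * fps_X)^i) n = of_nat (i choose n) * c^n"
proof (induction i arbitrary: n)
  case 0 then show ?case by simp
next
  case (Suc i)
  have "(1 + fps_const c * fps_X)^Suc i = (1 + fps_const c * fps_X)^i + fps_const c * (fps_X * (1 + fps_const c * fps_X)^i)"
    by (simp add: algebra_simps)
  moreover define P where "P = (1 + fps_const c * fps_X)^i"
  ultimately have e: "(1 + fps_const c * fps_X)^Suc i = P + fps_const c * (fps_X * P)" by simp
  have IH: "fps_nth P m = of_nat (i choose m) * c^m" for m using Suc P_def by simp
  show ?case unfolding e
    by (cases n) (simp_all add: IH algebra_simps)
qed

lemma ode_unique:
  fixes F :: "rat fps"
  assumes "(1 + fps_const a * fps_X) * fps_deriv F = fps_const (1/2) * F" "fps_nth F 0 = 0"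
  shows "F = 0"
proof -
  have rec: "of_nat (Suc n) * fps_nth F (Suc n) + a * of_nat n * fps_nth F n = fps_nth F n / 2" for n
  proof -
    have "fps_nth ((1 + fps_const a * fps_X) * fps_deriv F) n = fps_nth (fps_const (1/2) * F) n"
      using assms(1) by simp
    then show ?thesis
      by (cases n) (simp_all add: algebra_simps)
  qed
  have "fps_nth F n = 0" for n
  proof (induction n)
    case 0 then show ?case using assms(2) .
  next
    case (Suc n)
    then show ?case using rec[of n] by (simp del: of_nat_Suc)
  qed
  then show ?thesis by (intro fps_ext) simp
qed

lemma main_fps:
  fixes a :: rat and d :: "nat \<Rightarrow> rat"
  assumes i: "i \<ge> 1" and ia: "of_nat i * a = 1/2"
    and d0: "d 0 = 1" and d1: "d 1 = 1"
    and drec: "\<And>n. of_nat (n+2) * d (n+2) = d (n+1) + a^2 * of_nat n * d n"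
  shows "(1 - fps_const a * fps_X)^i * Abs_fps d = (1 + fps_const a * fps_X)^i"
proof -
  define D where "D = Abs_fps d"
  define L where "L = 1 + fps_const a * fps_X"
  define R where "R = 1 - fps_const a * fps_X"
  define Q where "Q = R^i"
  define N where "N = L^i"
  have LR: "L * R = 1 - fps_const (a^2) * fps_X^2"
    by (simp add: L_def R_def algebra_simps power2_eq_square fps_const_mult)
  have ode: "L * R * fps_deriv D = D"
  proof (rule fps_ext)
    fix n
    show "fps_nth (L * R * fps_deriv D) n = fps_nth D n"
    proof (cases n)
      case 0 then show ?thesis using d0 d1 by (simp add: LR D_def)
    next
      case (Suc m)
      note Sm = Suc
      show ?thesis
      proof (cases m)
        case 0 then show ?thesis using Sm drec[of 0] by (simp add: LR D_def fps_X_power_mult_nth numeral_2_eq_2)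
      next
        case (Suc p)
        then show ?thesis using Sm drec[of "Suc p"]
          by (simp add: LR D_def fps_X_power_mult_nth algebra_simps numeral_2_eq_2)
      qed
    qed
  qed
  have RQ': "R * fps_deriv Q = - fps_const (1/2) * Q"
  proof -
    have "fps_deriv Q = fps_const (of_nat i) * (- fps_const a) * R^(i-1)"
      by (simp add: Q_def R_def fps_deriv_power)
    then have "R * fps_deriv Q = - fps_const (of_nat i * a) * (R * R^(i-1))"
      by (simp add: algebra_simps fps_const_mult)
    also have "R * R^(i-1) = Q" using i by (simp add: Q_def power_eq_if)
    finally show ?thesis using ia by simp
  qed
  have LN': "L * fps_deriv N = fps_const (1/2) * N"
  proof -
    have "fps_deriv N = fps_const (of_nat i) * (fps_const a) * L^(i-1)"
      by (simp add: N_def L_def fps_deriv_power)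
    then have "L * fps_deriv N = fps_const (of_nat i * a) * (L * L^(i-1))"
      by (simp add: algebra_simps fps_const_mult)
    also have "L * L^(i-1) = N" using i by (simp add: N_def power_eq_if)
    finally show ?thesis using ia by simp
  qed
  define H where "H = Q * D"
  have "R * (L * fps_deriv H - fps_const (1/2) * H) = Q * (L * R * fps_deriv D) + L * (R * fps_deriv Q) * D - fps_const (1/2) * R * H"
    by (simp add: H_def algebra_simps)
  also have "\<dots> = Q * D - fps_const (1/2) * (L + R) * Q * D"
    unfolding ode RQ' H_def by (simp add: algebra_simps flip: fps_const_neg)
  also have "L + R = fps_const 2" by (simp add: L_def R_def numeral_fps_const)
  also have "Q * D - fps_const (1/2) * fps_const 2 * Q * D = 0"
    by (simp add: fps_const_mult[symmetric])
  finally have "R * (L * fps_deriv H - fps_const (1/2) * H) = 0" .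
  moreover have "R \<noteq> 0"
  proof
    assume "R = 0" then have "fps_nth R 0 = 0" by simp
    then show False by (simp add: R_def)
  qed
  ultimately have LH': "L * fps_deriv H = fps_const (1/2) * H" by simp
  have "H - N = 0"
  proof (rule ode_unique[of a])
    show "(1 + fps_const a * fps_X) * fps_deriv (H - N) = fps_const (1 / 2) * (H - N)"
    proof -
      have "L * fps_deriv (H - N) = L * fps_deriv H - L * fps_deriv N"
        by (simp only: fps_deriv_sub right_diff_distrib)
      also have "\<dots> = fps_const (1 / 2) * (H - N)" unfolding LH' LN' by (simp only: right_diff_distrib)
      finally show ?thesis unfolding L_def .
    qed
    show "fps_nth (H - N) 0 = 0"
      by (simp add: H_def Q_def N_def D_def R_def L_def d0 fps_nth_power_0)
  qed
  then show ?thesis by (simp add: H_def Q_def N_def D_def R_def L_def)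
qed


lemma diag_dvd_det:
  fixes A :: "'a::idom_modulo mat" and p :: 'a
  assumes A: "A \<in> carrier_mat k k" and S: "S \<subseteq> {0..<k}"
    and dv: "\<And>j c. j < k \<Longrightarrow> c \<in> S \<Longrightarrow> p dvd A $$ (j,c)"
  shows "p ^ card S dvd det A"
proof -
  define B where "B = mat k k (\<lambda>(j,c). if c \<in> S then A $$ (j,c) div p else A $$ (j,c))"
  define Dg where "Dg = mat k k (\<lambda>(l,c). if l = c then (if c \<in> S then p else 1) else 0)"
  have B: "B \<in> carrier_mat k k" and Dg: "Dg \<in> carrier_mat k k" by (auto simp: B_def Dg_def)
  have "B * Dg = A"
  proof (rule eq_matI)
    fix j c assume j: "j < dim_row A" and c: "c < dim_col A"
    then have jk: "j < k" and ck: "c < k" using A by auto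
    have "(B * Dg) $$ (j,c) = (\<Sum>l\<in>{0..<k}. B $$ (j,l) * Dg $$ (l,c))"
      using jk ck B Dg by (simp add: scalar_prod_def)
    also have "\<dots> = (\<Sum>l\<in>{0..<k}. if l = c then B $$ (j,c) * Dg $$ (c,c) else 0)"
      by (rule sum.cong) (auto simp: Dg_def ck)
    also have "\<dots> = B $$ (j,c) * Dg $$ (c,c)" using ck by simp
    also have "\<dots> = A $$ (j,c)"
      using jk ck dv[OF jk] by (auto simp: B_def Dg_def)
    finally show "(B * Dg) $$ (j,c) = A $$ (j,c)" .
  qed (use A B Dg in auto)
  then have "det A = det B * det Dg" using det_mult[OF B Dg] by simp
  moreover have "det Dg = p ^ card S"
  proof -
    have "upper_triangular Dg" by (auto simp: Dg_def)
    then have "det Dg = prod_list (diag_mat Dg)" by (rule det_upper_triangular[OF _ Dg])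
    also have "\<dots> = (\<Prod>c\<in>{0..<k}. if c \<in> S then p else 1)"
      by (simp add: diag_mat_def Dg_def prod.distinct_set_conv_list[symmetric])
    also have "\<dots> = (\<Prod>c\<in>{c\<in>{0..<k}. c \<in> S}. p)" by (rule prod.inter_filter[symmetric]) simp
    also have "{c\<in>{0..<k}. c \<in> S} = S" using S by auto
    finally show ?thesis by simp
  qed
  ultimately show ?thesis by simp
qed


definition ev :: "rat \<Rightarrow> int \<Rightarrow> rat" where
  "ev b x = poly (ctilde x) b"

lemma e_rec:
  fixes i :: nat and a b :: rat
  assumes i: "i \<ge> 1" and b: "b = 1 / (of_nat i)^2" and a: "a = 1 / (2 * of_nat i)"
  shows "of_nat (n+2) * poly (ctilde_nat (n+2)) b
         = poly (ctilde_nat (n+1)) b + a^2 * of_nat n * poly (ctilde_nat n) b"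
proof -
  have c: "ctilde_nat (n+2) = smult (1 / (of_nat n + 2)) (ctilde_nat (n+1) + [:0, of_nat n / 4:] * ctilde_nat n)"
    by (simp add: numeral_2_eq_2)
  have p: "poly (ctilde_nat (n+2)) b = (1 / (of_nat n + 2)) * (poly (ctilde_nat (n+1)) b + b * (of_nat n / 4) * poly (ctilde_nat n) b)"
    unfolding c by (simp add: algebra_simps)
  have "of_nat (n+2) * poly (ctilde_nat (n+2)) b
      = poly (ctilde_nat (n+1)) b + b * (of_nat n / 4) * poly (ctilde_nat n) b"
  proof -
    have nz: "(of_nat n + 2 :: rat) \<noteq> 0" by (simp add: add_pos_nonneg)
    have o: "of_nat (n+2) * (1 / (of_nat n + 2)) = (1::rat)" using nz by simp
    show ?thesis by (simp only: p mult.assoc[symmetric] o mult_1)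
  qed
  also have "b * (of_nat n / 4) = a^2 * of_nat n" using i by (simp add: a b field_simps power2_eq_square)
  finally show ?thesis by simp
qed

lemma odd_sum:
  fixes i :: nat and a b :: rat
  assumes i: "i \<ge> 1" and b: "b = 1 / (of_nat i)^2" and a: "a = 1 / (2 * of_nat i)"
    and n: "odd n"
  shows "(\<Sum>t=0..n. of_nat (i choose t) * (-a)^t * poly (ctilde_nat (n - t)) b) = 0"
proof -
  define e where "e n = poly (ctilde_nat n) b" for n
  define d where "d n = (if n = 0 then 1 else e n)" for n
  have ia: "of_nat i * a = 1/2" using i by (simp add: a)
  have d0: "d 0 = 1" and d1: "d 1 = 1" by (simp_all add: d_def e_def)
  have drec: "of_nat (n+2) * d (n+2) = d (n+1) + a^2 * of_nat n * d n" for n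
  proof -
    have h: "of_nat (n+2) * e (n+2) = e (n+1) + a^2 * of_nat n * e n"
      using e_rec[OF i b a, of n] unfolding e_def .
    have h1: "d (n+2) = e (n+2)" "d (n+1) = e (n+1)" by (simp_all add: d_def)
    have h2: "a^2 * of_nat n * d n = a^2 * of_nat n * e n" by (cases n) (simp_all add: d_def)
    show ?thesis unfolding h1 h2 by (rule h)
  qed
  have key: "(1 - fps_const a * fps_X)^i * Abs_fps d = (1 + fps_const a * fps_X)^i"
    by (rule main_fps[OF i ia d0 d1 drec])
  have E: "Abs_fps e = Abs_fps d + 1"
    proof (rule fps_ext)
    fix m show "fps_nth (Abs_fps e) m = fps_nth (Abs_fps d + 1) m" by (cases m) (simp_all add: d_def e_def)
  qed
  have Q: "(1 - fps_const a * fps_X) = (1 + fps_const (-a) * fps_X)"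
  proof -
    have "fps_const (- a) = - fps_const a" by (simp only: fps_const_neg)
    then show ?thesis by (simp only: mult_minus_left diff_conv_add_uminus)
  qed
  have "(1 - fps_const a * fps_X)^i * Abs_fps e = (1 + fps_const a * fps_X)^i + (1 - fps_const a * fps_X)^i"
    unfolding E distrib_left mult_1_right key by (rule refl)
  then have eq: "(1 + fps_const (-a) * fps_X)^i * Abs_fps e = (1 + fps_const a * fps_X)^i + (1 + fps_const (-a) * fps_X)^i"
    unfolding Q .
  have "fps_nth ((1 + fps_const (-a) * fps_X)^i * Abs_fps e) n
      = of_nat (i choose n) * a^n + of_nat (i choose n) * (-a)^n"
    unfolding eq fps_add_nth binom_fps_nth by (rule refl)
  also have "\<dots> = 0" using n by (simp add: power_minus_odd)
  finally show ?thesis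
    unfolding fps_mult_nth binom_fps_nth by (simp add: e_def)
qed

lemma sum_shrink:
  fixes f :: "nat \<Rightarrow> 'b::comm_monoid_add"
  assumes "\<And>t. p < t \<Longrightarrow> f t = 0" "p \<le> c"
  shows "sum f {0..c} = sum f {0..p}"
  by (rule sum.mono_neutral_right) (use assms in auto)

lemma entry_zero:
  fixes i c :: nat and s :: int and a b :: rat
  assumes i: "i \<ge> 1" and b: "b = 1 / (of_nat i)^2" and a: "a = 1 / (2 * of_nat i)"
    and ic: "i \<le> c" and s: "odd s"
  shows "(\<Sum>t=0..c. of_nat (i choose t) * (-a)^t * poly (ctilde (s - int t)) b) = 0"
proof (cases "s < 0")
  case True
  then show ?thesis by (simp add: ctilde_def)
next
  case False
  define n where "n = nat s"
  have sn: "s = int n" using False by (simp add: n_def)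
  have n: "odd n" using s sn by (simp add: even_of_nat_iff[symmetric])
  define f where "f t = of_nat (i choose t) * (-a)^t * poly (ctilde (s - int t)) b" for t
  have z: "f t = 0" if "min c n < t" for t
  proof (cases "c < t")
    case True then have "i < t" using ic by simp
    then show ?thesis by (simp add: f_def)
  next
    case False then have "n < t" using that by simp
    then show ?thesis by (simp add: f_def ctilde_def sn)
  qed
  have "sum f {0..c} = sum f {0..min c n}" by (rule sum_shrink[OF z]) auto
  also have "\<dots> = sum f {0..n}" by (rule sum_shrink[OF z, symmetric]) auto
  also have "\<dots> = (\<Sum>t=0..n. of_nat (i choose t) * (-a)^t * poly (ctilde_nat (n - t)) b)"
    by (rule sum.cong) (auto simp: f_def ctilde_def sn of_nat_diff nat_diff_distrib)
  also have "\<dots> = 0" by (rule odd_sum[OF i b a n])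
  finally show ?thesis by (simp add: f_def)
qed

theorem lemma4p8:
  fixes k i :: nat
  assumes "k \<ge> 1" and "1 \<le> i" and "i < (k + 1) div 2"
  shows "[:- (1 / (of_nat i)^2), 1:] ^ ((k + 1) div 2 - i) dvd Pk k"
proof -
  note i = assms(2)
  define b :: rat where "b = 1 / (of_nat i)^2"
  define a :: rat where "a = 1 / (2 * of_nat i)"
  define m where "m = (k + 1) div 2 - i"
  define S where "S = (\<lambda>r. k - 1 - 2 * r) ` {..<m}"
  define q where "q t = of_nat (i choose t) * (-a)^t" for t
  define M where "M = mat k k (\<lambda>(j, l). ctilde (int k - 2 * int j + int l))"
  define U where "U = mat k k (\<lambda>(l,c). if c \<in> S then (if l \<le> c then [:q (c-l):] else 0) else (if l = c then 1 else (0::rat poly)))"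
  have M: "M \<in> carrier_mat k k" and U: "U \<in> carrier_mat k k" by (auto simp: M_def U_def)
  have rb: "2 * r + 2 * i + 1 \<le> k" if "r < m" for r
    using that assms unfolding m_def by linarith
  have detU: "det U = 1"
  proof -
    have "upper_triangular U" by (auto simp: U_def)
    then have "det U = prod_list (diag_mat U)" by (rule det_upper_triangular[OF _ U])
    also have "diag_mat U = map (\<lambda>_. 1) [0..<k]"
      unfolding diag_mat_def using U by (intro map_cong) (auto simp: U_def q_def)
    also have "prod_list (map (\<lambda>_. 1::rat poly) [0..<k]) = 1" by (induction k) auto
    finally show ?thesis .
  qed
  have detMU: "det (M * U) = Pk k"
    using det_mult[OF M U] detU by (simp add: Pk_def M_def)
  have Sk: "S \<subseteq> {0..<k}" using rb assms(1) by (auto simp: S_def)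
  have cardS: "card S = m"
  proof -
    have "inj_on (\<lambda>r. k - 1 - 2 * r) {..<m}"
    proof (rule inj_onI)
      fix x y assume "x \<in> {..<m}" "y \<in> {..<m}" "k - 1 - 2 * x = k - 1 - 2 * y"
      then show "x = y" using rb[of x] rb[of y] by auto
    qed
    then show ?thesis by (simp add: S_def card_image)
  qed
  have dv: "[:- b, 1:] dvd (M * U) $$ (j,c)" if j: "j < k" and c: "c \<in> S" for j c
  proof -
    obtain r where r: "r < m" and cr: "c = k - 1 - 2 * r" using c by (auto simp: S_def)
    have rk: "2 * r + 2 * i + 1 \<le> k" by (rule rb[OF r])
    have ck: "c < k" and ic: "i \<le> c" using rk cr by auto
    define s where "s = int k - 2 * int j + int c"
    have so: "odd s" using rk cr unfolding s_def by (simp add: of_nat_diff)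
    have "(M * U) $$ (j,c) = (\<Sum>l\<in>{0..<k}. M $$ (j,l) * U $$ (l,c))"
      using j ck M U by (simp add: scalar_prod_def)
    then have "poly ((M * U) $$ (j,c)) b = (\<Sum>l\<in>{0..<k}. poly (ctilde (int k - 2 * int j + int l)) b * (if l \<le> c then q (c - l) else 0))"
      using j c ck by (simp add: poly_sum M_def U_def) (rule sum.cong, auto)
    also have "\<dots> = (\<Sum>l\<in>{0..<k}. if l \<le> c then poly (ctilde (int k - 2 * int j + int l)) b * q (c - l) else 0)"
      by (rule sum.cong) auto
    also have "\<dots> = (\<Sum>l\<in>{l\<in>{0..<k}. l \<le> c}. poly (ctilde (int k - 2 * int j + int l)) b * q (c - l))"
      by (rule sum.inter_filter[symmetric]) simp
    also have "{l\<in>{0..<k}. l \<le> c} = {0..c}" using ck by auto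
    also have "(\<Sum>l\<in>{0..c}. poly (ctilde (int k - 2 * int j + int l)) b * q (c - l))
       = (\<Sum>l\<in>{0..c}. poly (ctilde (int k - 2 * int j + int (c + 0 - l))) b * q (c - (c + 0 - l)))"
      by (rule sum.atLeastAtMost_rev)
    also have "\<dots> = (\<Sum>t=0..c. of_nat (i choose t) * (-a)^t * poly (ctilde (s - int t)) b)"
      by (rule sum.cong) (auto simp: q_def s_def of_nat_diff add_diff_eq)
    also have "\<dots> = 0" by (rule entry_zero[OF i b_def a_def ic so])
    finally show ?thesis by (simp add: poly_eq_0_iff_dvd)
  qed
  have "[:- b, 1:] ^ card S dvd det (M * U)"
    by (rule diag_dvd_det[OF _ Sk dv]) (use M U in auto)
  then show ?thesis unfolding detMU cardS m_def b_def .
qed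

end
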